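(* Let $X$ be an infinite-dimensional complex separable Hilbert space and $A\in\mathcal B(X)$ with an unconditional basis of eigenvectors $\{\varphi_n\}_{n\ge1}$, $A\varphi_n=-\lambda_n\varphi_n$. Let $b\in X$ and $B:X\to\mathbb C$, $Bx=\langle x,b\rangle$. Then $(A,B)$ is exactly observable on $[0,\infty)$ (equivalently, $\{e^{tA^*}b\}_{t\in[0,\infty)}$ is a semi-continuous frame for $X$) if and only if all of the following hold: (1) $\mathrm{Re}(\lambda_n)>0$ for all $n$; (2) $\mathrm{Re}(\lambda_n)\to0$ as $n\to\infty$; (3) the functions $\mathcal E_n(t)=e^{-\lambda_nt}\langle\varphi_n,b\rangle$, $n\ge1$, form an unconditional sequence in $L^2([0,\infty),\mathbb C)$; (4) there are constants $0<c_1\le c_2<\infty$ with $c_1\le \dfrac{|\langle b,\varphi_n\rangle|}{\|\varphi_n\|\sqrt{2\mathrm{Re}(\lambda_n)}}\le c_2$ for all $n$.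
   Context: $e^{tA}=\sum_n(tA)^n/n!$. $(A,B)$ is exactly observable on $[0,\infty)$ if there are $c_1,c_2>0$ with $c_1\|x\|^2\le\int_0^\infty|\langle e^{tA}x,b\rangle|^2dt\le c_2\|x\|^2$ for all $x\in X$. A sequence $\{\psi_n\}$ is an unconditional sequence if there are $c_1,c_2>0$ with $c_1\sum|a_n|^2\|\psi_n\|^2\le\|\sum a_n\psi_n\|^2\le c_2\sum|a_n|^2\|\psi_n\|^2$ for all finitely supported scalar sequences; an unconditional basis is a complete unconditional sequence. *)

theory Defs
  imports "HOL-Analysis.Analysis"
begin

text \<open>A complex Hilbert space is modelled as a real Banach space type 'a together with
  a complex scalar multiplication sm (extending the real one) and a complex inner
  product ip (linear in the first, conjugate-linear in the second argument) whose
  induced norm is the norm of 'a.\<close>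

definition complex_hilbert :: "(complex \<Rightarrow> 'a::banach \<Rightarrow> 'a) \<Rightarrow> ('a \<Rightarrow> 'a \<Rightarrow> complex) \<Rightarrow> bool" where
  "complex_hilbert sm ip \<longleftrightarrow>
     (\<forall>x. sm 1 x = x) \<and>
     (\<forall>a c x. sm a (sm c x) = sm (a * c) x) \<and>
     (\<forall>a x y. sm a (x + y) = sm a x + sm a y) \<and>
     (\<forall>a c x. sm (a + c) x = sm a x + sm c x) \<and>
     (\<forall>r x. sm (complex_of_real r) x = r *\<^sub>R x) \<and>
     (\<forall>x y z. ip (x + y) z = ip x z + ip y z) \<and>
     (\<forall>a x y. ip (sm a x) y = a * ip x y) \<and>
     (\<forall>x y. ip y x = cnj (ip x y)) \<and>
     (\<forall>x. ip x x = complex_of_real ((norm x)\<^sup>2))"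

definition separable_space :: "'a::metric_space itself \<Rightarrow> bool" where
  "separable_space _ \<longleftrightarrow> (\<exists>D::'a set. countable D \<and> closure D = UNIV)"

definition cspan :: "(complex \<Rightarrow> 'a::banach \<Rightarrow> 'a) \<Rightarrow> 'a set \<Rightarrow> 'a set" where
  "cspan sm S = {y. \<exists>F c. finite F \<and> F \<subseteq> S \<and> y = (\<Sum>v\<in>F. sm (c v) v)}"

definition infinite_dimensional :: "(complex \<Rightarrow> 'a::banach \<Rightarrow> 'a) \<Rightarrow> bool" where
  "infinite_dimensional sm \<longleftrightarrow> \<not> (\<exists>S. finite S \<and> cspan sm S = UNIV)"

definition bounded_cop :: "(complex \<Rightarrow> 'a::banach \<Rightarrow> 'a) \<Rightarrow> ('a \<Rightarrow> 'a) \<Rightarrow> bool" where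
  "bounded_cop sm A \<longleftrightarrow>
     (\<forall>x y. A (x + y) = A x + A y) \<and> (\<forall>c x. A (sm c x) = sm c (A x)) \<and>
     (\<exists>K. \<forall>x. norm (A x) \<le> K * norm x)"

definition expop :: "('a::banach \<Rightarrow> 'a) \<Rightarrow> real \<Rightarrow> 'a \<Rightarrow> 'a" where
  "expop A t x = (\<Sum>n. (t ^ n / fact n) *\<^sub>R (A ^^ n) x)"

definition exactly_observable ::
    "('a::banach \<Rightarrow> 'a \<Rightarrow> complex) \<Rightarrow> ('a \<Rightarrow> 'a) \<Rightarrow> 'a \<Rightarrow> bool" where
  "exactly_observable ip A b \<longleftrightarrow>
     (\<exists>c1 c2. c1 > 0 \<and> c2 > 0 \<and> (\<forall>x.
        ennreal (c1 * (norm x)\<^sup>2) \<le> (\<integral>\<^sup>+ t \<in> {0..}. ennreal ((cmod (ip (expop A t x) b))\<^sup>2) \<partial>lborel) \<and>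
        (\<integral>\<^sup>+ t \<in> {0..}. ennreal ((cmod (ip (expop A t x) b))\<^sup>2) \<partial>lborel) \<le> ennreal (c2 * (norm x)\<^sup>2)))"

definition unconditional_seq :: "(complex \<Rightarrow> 'a::banach \<Rightarrow> 'a) \<Rightarrow> (nat \<Rightarrow> 'a) \<Rightarrow> bool" where
  "unconditional_seq sm \<phi> \<longleftrightarrow>
     (\<exists>c1 c2. c1 > 0 \<and> c2 > 0 \<and> (\<forall>F a. finite F \<longrightarrow>
        c1 * (\<Sum>n\<in>F. (cmod (a n))\<^sup>2 * (norm (\<phi> n))\<^sup>2) \<le> (norm (\<Sum>n\<in>F. sm (a n) (\<phi> n)))\<^sup>2 \<and>
        (norm (\<Sum>n\<in>F. sm (a n) (\<phi> n)))\<^sup>2 \<le> c2 * (\<Sum>n\<in>F. (cmod (a n))\<^sup>2 * (norm (\<phi> n))\<^sup>2)))"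

definition unconditional_basis :: "(complex \<Rightarrow> 'a::banach \<Rightarrow> 'a) \<Rightarrow> (nat \<Rightarrow> 'a) \<Rightarrow> bool" where
  "unconditional_basis sm \<phi> \<longleftrightarrow> unconditional_seq sm \<phi> \<and> closure (cspan sm (range \<phi>)) = UNIV"

definition L2_sq :: "(real \<Rightarrow> complex) \<Rightarrow> ennreal" where
  "L2_sq f = (\<integral>\<^sup>+ t \<in> {0..}. ennreal ((cmod (f t))\<^sup>2) \<partial>lborel)"

definition in_L2 :: "(real \<Rightarrow> complex) \<Rightarrow> bool" where
  "in_L2 f \<longleftrightarrow> f \<in> borel_measurable lborel \<and> L2_sq f < \<infinity>"

definition unconditional_seq_L2 :: "(nat \<Rightarrow> real \<Rightarrow> complex) \<Rightarrow> bool" where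
  "unconditional_seq_L2 E \<longleftrightarrow> (\<forall>n. in_L2 (E n)) \<and>
     (\<exists>c1 c2. c1 > 0 \<and> c2 > 0 \<and> (\<forall>F a. finite F \<longrightarrow>
        c1 * (\<Sum>n\<in>F. (cmod (a n))\<^sup>2 * enn2real (L2_sq (E n)))
          \<le> enn2real (L2_sq (\<lambda>t. \<Sum>n\<in>F. a n * E n t)) \<and>
        enn2real (L2_sq (\<lambda>t. \<Sum>n\<in>F. a n * E n t))
          \<le> c2 * (\<Sum>n\<in>F. (cmod (a n))\<^sup>2 * enn2real (L2_sq (E n)))))"

end

theory Submission
  imports Defs
begin

context
  fixes sm :: "complex \<Rightarrow> 'a::banach \<Rightarrow> 'a" and ip :: "'a \<Rightarrow> 'a \<Rightarrow> complex"
  assumes hilb: "complex_hilbert sm ip"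
begin

lemma sm1: "sm 1 x = x"
  using hilb unfolding complex_hilbert_def by meson

lemma sm_assoc: "sm a (sm c x) = sm (a * c) x"
  using hilb unfolding complex_hilbert_def by meson

lemma sm_addR: "sm a (x + y) = sm a x + sm a y"
  using hilb unfolding complex_hilbert_def by meson

lemma sm_addL: "sm (a + c) x = sm a x + sm c x"
  using hilb unfolding complex_hilbert_def by meson

lemma sm_real: "sm (complex_of_real r) x = r *\<^sub>R x"
  using hilb unfolding complex_hilbert_def by meson

lemma ip_addL: "ip (x + y) z = ip x z + ip y z"
  using hilb unfolding complex_hilbert_def by meson

lemma ip_smL: "ip (sm a x) y = a * ip x y"
  using hilb unfolding complex_hilbert_def by meson

lemma ip_cnj: "ip y x = cnj (ip x y)"
  using hilb unfolding complex_hilbert_def by meson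

lemma ip_self: "ip x x = complex_of_real ((norm x)\<^sup>2)"
  using hilb unfolding complex_hilbert_def by meson

lemma sm_zeroL[simp]: "sm 0 x = 0"
  using sm_real[of 0 x] by simp

lemma sm_zeroR[simp]: "sm a 0 = 0"
  using sm_addR[of a 0 0] by simp

lemma sm_minusR: "sm a (- x) = - sm a x"
proof -
  have "sm a x + sm a (-x) = 0" using sm_addR[of a x "-x"] by simp
  thus ?thesis by (metis add.inverse_unique)
qed

lemma sm_diffR: "sm a (x - y) = sm a x - sm a y"
  using sm_addR[of a x "-y"] sm_minusR by simp

lemma sm_minusL: "sm (- a) x = - sm a x"
proof -
  have "sm a x + sm (-a) x = 0" using sm_addL[of a "-a" x] by simp
  thus ?thesis by (metis add.inverse_unique)
qed

lemma sm_diffL: "sm (a - c) x = sm a x - sm c x"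
  using sm_addL[of a "-c" x] sm_minusL by simp

lemma sm_sumR: "sm a (\<Sum>i\<in>F. f i) = (\<Sum>i\<in>F. sm a (f i))"
  by (induction F rule: infinite_finite_induct) (auto simp: sm_addR)

lemma sm_sumL: "sm (\<Sum>i\<in>F. f i) x = (\<Sum>i\<in>F. sm (f i) x)"
  by (induction F rule: infinite_finite_induct) (auto simp: sm_addL)

lemma ip_zeroL[simp]: "ip 0 z = 0"
  using ip_addL[of 0 0 z] by simp

lemma ip_zeroR[simp]: "ip z 0 = 0"
  using ip_cnj[of 0 z] by simp

lemma ip_minusL: "ip (- x) z = - ip x z"
proof -
  have "ip x z + ip (-x) z = 0" using ip_addL[of x "-x" z] by simp
  thus ?thesis by (metis add.inverse_unique)
qed

lemma ip_diffL: "ip (x - y) z = ip x z - ip y z"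
  using ip_addL[of x "-y" z] ip_minusL by simp

lemma ip_sumL: "ip (\<Sum>i\<in>F. f i) z = (\<Sum>i\<in>F. ip (f i) z)"
  by (induction F rule: infinite_finite_induct) (auto simp: ip_addL)

lemma ip_addR: "ip z (x + y) = ip z x + ip z y"
  by (subst (1 2 3) ip_cnj) (simp add: ip_addL)

lemma ip_minusR: "ip z (- x) = - ip z x"
  by (subst (1 2) ip_cnj) (simp add: ip_minusL)

lemma ip_diffR: "ip z (x - y) = ip z x - ip z y"
  by (subst (1 2 3) ip_cnj) (simp add: ip_diffL)

lemma ip_smR: "ip x (sm a y) = cnj a * ip x y"
  by (subst (1 2) ip_cnj) (simp add: ip_smL)

lemma norm_sm: "norm (sm a x) = cmod a * norm x"
proof -
  have "ip (sm a x) (sm a x) = a * cnj a * ip x x"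
    by (simp add: ip_smL ip_smR mult.assoc)
  hence "complex_of_real ((norm (sm a x))\<^sup>2) = a * cnj a * complex_of_real ((norm x)\<^sup>2)"
    by (simp only: ip_self)
  also have "a * cnj a = complex_of_real ((cmod a)\<^sup>2)" by (rule complex_norm_square[symmetric])
  finally have "(norm (sm a x))\<^sup>2 = ((cmod a)\<^sup>2) * (norm x)\<^sup>2"
    by (metis of_real_eq_iff of_real_mult)
  then have "(norm (sm a x))\<^sup>2 = (cmod a * norm x)\<^sup>2" by (simp add: power_mult_distrib)
  then show ?thesis by (simp add: power2_eq_iff_nonneg)
qed

lemma sm_decomp: "sm c x = Re c *\<^sub>R x + Im c *\<^sub>R sm \<i> x"
proof -
  have "sm c x = sm (complex_of_real (Re c)) x + sm (\<i> * complex_of_real (Im c)) x"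
    by (metis complex_eq mult.commute sm_addL)
  also have "sm (\<i> * complex_of_real (Im c)) x = sm (complex_of_real (Im c)) (sm \<i> x)"
    by (metis mult.commute sm_assoc)
  finally show ?thesis by (simp add: sm_real)
qed

lemma Re_ip_self_add: "Re (ip (x + y) (x + y)) = (norm x)\<^sup>2 + (norm y)\<^sup>2 + 2 * Re (ip x y)"
proof -
  have "ip (x + y) (x + y) = ip x x + ip y y + (ip x y + cnj (ip x y))"
    by (simp add: ip_addL ip_addR ip_cnj[of x y] algebra_simps)
  then show ?thesis by (simp add: ip_self)
qed

lemma Re_ip_le: "Re (ip x y) \<le> norm x * norm y"
proof -
  have a: "(norm (x + y))\<^sup>2 = (norm x)\<^sup>2 + (norm y)\<^sup>2 + 2 * Re (ip x y)"
    using Re_ip_self_add[of x y] by (simp add: ip_self)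
  have b: "(norm (x + (- y)))\<^sup>2 = (norm x)\<^sup>2 + (norm y)\<^sup>2 - 2 * Re (ip x y)"
    using Re_ip_self_add[of x "-y"] by (simp add: ip_self ip_minusR)
  have "norm (x + y) \<le> norm x + norm y" by (rule norm_triangle_ineq)
  hence "(norm (x + y))\<^sup>2 \<le> (norm x + norm y)\<^sup>2" by (simp add: power_mono)
  have "\<bar>norm x - norm y\<bar> \<le> norm (x - y)" by (rule norm_triangle_ineq3)
  hence "(norm x - norm y)\<^sup>2 \<le> (norm (x - y))\<^sup>2"
    by (metis abs_le_square_iff abs_norm_cancel)
  show ?thesis using a b \<open>(norm (x + y))\<^sup>2 \<le> _\<close> \<open>(norm x - norm y)\<^sup>2 \<le> _\<close>
    by (simp add: power2_eq_square algebra_simps)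
qed

lemma cs: "cmod (ip x y) \<le> norm x * norm y"
proof (cases "ip x y = 0")
  case True then show ?thesis by simp
next
  case False
  define u where "u = cnj (ip x y) / complex_of_real (cmod (ip x y))"
  have cu: "cmod u = 1" using False by (simp add: u_def norm_divide)
  have "cnj (ip x y) * ip x y = complex_of_real ((cmod (ip x y))\<^sup>2)"
    by (metis complex_norm_square mult.commute)
  hence "u * ip x y = complex_of_real (cmod (ip x y))"
    using False by (simp add: u_def power2_eq_square)
  hence "cmod (ip x y) = Re (ip (sm u x) y)" by (simp add: ip_smL)
  also have "\<dots> \<le> norm (sm u x) * norm y" by (rule Re_ip_le)
  finally show ?thesis by (simp add: norm_sm cu)
qed

end


context
  fixes sm :: "complex \<Rightarrow> 'a::banach \<Rightarrow> 'a" and ip :: "'a \<Rightarrow> 'a \<Rightarrow> complex"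
    and A :: "'a \<Rightarrow> 'a"
  assumes hilb: "complex_hilbert sm ip" and bdd: "bounded_cop sm A"
begin

lemma A_add: "A (x + y) = A x + A y" and A_sm: "A (sm c x) = sm c (A x)"
  using bdd unfolding bounded_cop_def by meson+

lemma A_bound: "\<exists>K\<ge>0. \<forall>x. norm (A x) \<le> K * norm x"
proof -
  obtain K where K: "\<And>x. norm (A x) \<le> K * norm x" using bdd unfolding bounded_cop_def by meson
  have "norm (A x) \<le> max K 0 * norm x" for x
    using K[of x] by (meson max.cobounded1 mult_right_mono norm_ge_zero order_trans)
  thus ?thesis by (intro exI[of _ "max K 0"]) auto
qed

lemma A_bl: "bounded_linear A"
proof -
  obtain K where K: "K \<ge> 0" "\<And>x. norm (A x) \<le> K * norm x" using A_bound by blast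
  show ?thesis
  proof (rule bounded_linear_intro[of _ K])
    show "A (x + y) = A x + A y" for x y by (rule A_add)
    show "A (r *\<^sub>R x) = r *\<^sub>R A x" for r x
      using A_sm[of "complex_of_real r" x] sm_real[OF hilb] by simp
    show "norm (A x) \<le> norm x * K" for x using K(2)[of x] by (simp add: mult.commute)
  qed
qed

lemma Ak_bl: "bounded_linear (A ^^ n)"
proof (induction n)
  case 0 then show ?case by (simp add: bounded_linear_ident id_def)
next
  case (Suc n)
  then show ?case using bounded_linear_compose[OF A_bl Suc] by (simp add: o_def)
qed

lemma Ak_bound: "\<exists>K\<ge>0. \<forall>n x. norm ((A ^^ n) x) \<le> K ^ n * norm x"
proof -
  obtain K where K: "K \<ge> 0" "\<And>x. norm (A x) \<le> K * norm x" using A_bound by blast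
  have "norm ((A ^^ n) x) \<le> K ^ n * norm x" for n x
  proof (induction n)
    case 0 then show ?case by simp
  next
    case (Suc n)
    have "norm ((A ^^ Suc n) x) = norm (A ((A ^^ n) x))" by simp
    also have "\<dots> \<le> K * norm ((A ^^ n) x)" by (rule K(2))
    also have "\<dots> \<le> K * (K ^ n * norm x)" using Suc K(1) by (rule mult_left_mono)
    finally show ?case by (simp add: mult.assoc)
  qed
  with K(1) show ?thesis by blast
qed

lemma expop_summable: "summable (\<lambda>n. (t ^ n / fact n) *\<^sub>R (A ^^ n) x)"
  and expop_norm_le: "norm (expop A t x) \<le> exp (\<bar>t\<bar> * K0) * norm x"
    if "K0 \<ge> 0" "\<And>n x. norm ((A ^^ n) x) \<le> K0 ^ n * norm x" for K0
proof -
  let ?g = "\<lambda>n. ((\<bar>t\<bar> * K0) ^ n / fact n) * norm x"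
  have g: "?g sums (exp (\<bar>t\<bar> * K0) * norm x)"
    using sums_mult2[OF exp_converges[of "\<bar>t\<bar> * K0"], of "norm x"] by (simp add: divide_inverse algebra_simps)
  have le: "norm ((t ^ n / fact n) *\<^sub>R (A ^^ n) x) \<le> ?g n" for n
  proof -
    have "norm ((t ^ n / fact n) *\<^sub>R (A ^^ n) x) = (\<bar>t\<bar> ^ n / fact n) * norm ((A ^^ n) x)"
      by (simp add: power_abs)
    also have "\<dots> \<le> (\<bar>t\<bar> ^ n / fact n) * (K0 ^ n * norm x)"
      by (rule mult_left_mono[OF that(2)]) simp
    finally show ?thesis by (simp add: power_mult_distrib)
  qed
  have sn: "summable (\<lambda>n. norm ((t ^ n / fact n) *\<^sub>R (A ^^ n) x))"
    by (rule summable_comparison_test[OF _ sums_summable[OF g]]) (use le in auto)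
  show "summable (\<lambda>n. (t ^ n / fact n) *\<^sub>R (A ^^ n) x)" by (rule summable_norm_cancel[OF sn])
  have "norm (expop A t x) \<le> (\<Sum>n. norm ((t ^ n / fact n) *\<^sub>R (A ^^ n) x))"
    unfolding expop_def by (rule summable_norm[OF sn])
  also have "\<dots> \<le> suminf ?g" by (rule suminf_le[OF le sn sums_summable[OF g]])
  also have "\<dots> = exp (\<bar>t\<bar> * K0) * norm x" using g by (simp add: sums_iff)
  finally show "norm (expop A t x) \<le> exp (\<bar>t\<bar> * K0) * norm x" .
qed

lemma expop_summable': "summable (\<lambda>n. (t ^ n / fact n) *\<^sub>R (A ^^ n) x)"
  using Ak_bound expop_summable by blast

lemma expop_norm: "\<exists>K\<ge>0. \<forall>t x. norm (expop A t x) \<le> exp (\<bar>t\<bar> * K) * norm x"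
  using Ak_bound expop_norm_le by blast

lemma expop_add: "expop A t (x + y) = expop A t x + expop A t y"
proof -
  have "(\<lambda>n. (t ^ n / fact n) *\<^sub>R (A ^^ n) (x + y)) =
        (\<lambda>n. (t ^ n / fact n) *\<^sub>R (A ^^ n) x + (t ^ n / fact n) *\<^sub>R (A ^^ n) y)"
    by (simp add: linear_add[OF bounded_linear.linear[OF Ak_bl]] scaleR_add_right)
  then show ?thesis unfolding expop_def
    using suminf_add[OF expop_summable' expop_summable'] by simp
qed

lemma expop_zero: "expop A t 0 = 0"
  using expop_add[of t 0 0] by simp

lemma expop_diff: "expop A t (x - y) = expop A t x - expop A t y"
  using expop_add[of t "x - y" y] by simp

lemma expop_sum: "expop A t (\<Sum>i\<in>F. f i) = (\<Sum>i\<in>F. expop A t (f i))"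
  by (induction F rule: infinite_finite_induct) (auto simp: expop_zero expop_add)

lemma expop_cont: "x \<longlonglongrightarrow> y \<Longrightarrow> (\<lambda>k. expop A t (x k)) \<longlonglongrightarrow> expop A t y"
proof -
  assume xy: "x \<longlonglongrightarrow> y"
  obtain K where K: "K \<ge> 0" "\<And>t x. norm (expop A t x) \<le> exp (\<bar>t\<bar> * K) * norm x"
    using expop_norm by blast
  have "(\<lambda>k. norm (x k - y)) \<longlonglongrightarrow> 0"
    using xy by (simp add: LIM_zero_iff tendsto_norm_zero)
  hence "(\<lambda>k. exp (\<bar>t\<bar> * K) * norm (x k - y)) \<longlonglongrightarrow> exp (\<bar>t\<bar> * K) * 0"
    by (intro tendsto_intros)
  hence g0: "(\<lambda>k. exp (\<bar>t\<bar> * K) * norm (x k - y)) \<longlonglongrightarrow> 0" by simp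
  have "norm (expop A t (x k) - expop A t y) \<le> exp (\<bar>t\<bar> * K) * norm (x k - y)" for k
    using K(2)[of t "x k - y"] by (simp add: expop_diff)
  hence "(\<lambda>k. expop A t (x k) - expop A t y) \<longlonglongrightarrow> 0"
    by (intro Lim_null_comparison[OF _ g0] always_eventually) auto
  thus ?thesis by (simp add: LIM_zero_iff)
qed

lemma Ak_eig: "A \<phi> = sm (- l) \<phi> \<Longrightarrow> (A ^^ n) (sm a \<phi>) = sm (a * (- l) ^ n) \<phi>"
proof (induction n)
  case 0 then show ?case by simp
next
  case (Suc n)
  then show ?case by (simp add: A_sm sm_assoc[OF hilb] mult_ac)
qed

lemma expop_eig:
  assumes eig: "A \<phi> = sm (- l) \<phi>"
  shows "expop A t (sm a \<phi>) = sm (a * exp (- l * complex_of_real t)) \<phi>"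
proof -
  define c where "c n = a * (complex_of_real (t ^ n / fact n) * (- l) ^ n)" for n
  have ceq: "(- l * complex_of_real t) ^ n /\<^sub>R fact n = complex_of_real (t ^ n / fact n) * (- l) ^ n" for n
  proof -
    have "(- l * complex_of_real t) ^ n = (- l) ^ n * complex_of_real t ^ n" by (rule power_mult_distrib)
    then show ?thesis by (simp add: scaleR_conv_of_real divide_inverse mult_ac)
  qed
  have cs: "c sums (a * exp (- l * complex_of_real t))"
    using sums_mult[OF exp_converges[of "- l * complex_of_real t"], of a] unfolding ceq c_def .
  have trm: "(t ^ n / fact n) *\<^sub>R (A ^^ n) (sm a \<phi>) = Re (c n) *\<^sub>R \<phi> + Im (c n) *\<^sub>R sm \<i> \<phi>" for n
  proof -
    have "(t ^ n / fact n) *\<^sub>R (A ^^ n) (sm a \<phi>) = sm (complex_of_real (t ^ n / fact n)) (sm (a * (- l) ^ n) \<phi>)"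
      by (simp only: Ak_eig[OF eig] sm_real[OF hilb])
    also have "\<dots> = sm (c n) \<phi>"
      unfolding sm_assoc[OF hilb] c_def by (simp only: mult_ac)
    finally show ?thesis by (simp only: sm_decomp[OF hilb, of "c n" \<phi>])
  qed
  have "(\<lambda>n. Re (c n) *\<^sub>R \<phi> + Im (c n) *\<^sub>R sm \<i> \<phi>) sums
        (Re (a * exp (- l * complex_of_real t)) *\<^sub>R \<phi> + Im (a * exp (- l * complex_of_real t)) *\<^sub>R sm \<i> \<phi>)"
    using cs unfolding sums_complex_iff by (intro sums_add sums_scaleR_left) auto
  hence "(\<lambda>n. (t ^ n / fact n) *\<^sub>R (A ^^ n) (sm a \<phi>)) sums sm (a * exp (- l * complex_of_real t)) \<phi>"
    by (simp only: trm sm_decomp[OF hilb, of "a * exp (- l * complex_of_real t)" \<phi>])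
  thus ?thesis unfolding expop_def by (simp add: sums_iff)
qed

end


lemma exp_nn_integral:
  assumes r: "r > 0"
  shows "(\<integral>\<^sup>+ t \<in> {0..}. ennreal (exp (- r * t)) \<partial>lborel) = ennreal (1 / r)"
proof -
  have "((\<lambda>x::real. exp (-r*x)) has_integral exp (-r*0)/r) {0..}"
    by (rule has_integral_exp_minus_to_infinity[OF r])
  hence h: "((\<lambda>x::real. exp (-r*x)) has_integral 1/r) {0..}" by simp
  have "((\<lambda>x::real. if x \<in> {0..} then exp (-r*x) else 0) has_integral 1/r) UNIV"
    by (subst has_integral_restrict_UNIV) (rule h)
  hence "integral\<^sup>N lborel (\<lambda>x::real. if x \<in> {0..} then exp (-r*x) else 0) = ennreal (1/r)"
    by (intro nn_integral_has_integral_lborel) auto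
  moreover have "(\<lambda>x::real. ennreal (if x \<in> {0..} then exp (-r*x) else 0)) =
        (\<lambda>x. ennreal (exp (- r * x)) * indicator {0..} x)"
    by (auto simp: indicator_def fun_eq_iff)
  ultimately show ?thesis by simp
qed

lemma cmod_exp_sq: "(cmod (exp (- l * complex_of_real t) * p))\<^sup>2 = (cmod p)\<^sup>2 * exp (- (2 * Re l) * t)"
proof -
  have "cmod (exp (- l * complex_of_real t)) = exp (- Re l * t)"
    by (simp add: norm_exp_eq_Re)
  moreover have "(exp (- Re l * t))\<^sup>2 = exp (- (2 * Re l) * t)"
    by (simp add: power2_eq_square exp_add[symmetric])
  ultimately show ?thesis by (simp add: norm_mult power_mult_distrib mult.commute)
qed

lemma L2_exp:
  assumes "Re l > 0"
  shows "L2_sq (\<lambda>t. exp (- l * complex_of_real t) * p) = ennreal ((cmod p)\<^sup>2 / (2 * Re l))"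
proof -
  have "L2_sq (\<lambda>t. exp (- l * complex_of_real t) * p) =
      (\<integral>\<^sup>+ t. ennreal ((cmod p)\<^sup>2) * (ennreal (exp (- (2 * Re l) * t)) * indicator {0..} t) \<partial>lborel)"
    unfolding L2_sq_def cmod_exp_sq by (simp add: ennreal_mult mult.assoc)
  also have "\<dots> = ennreal ((cmod p)\<^sup>2) * (\<integral>\<^sup>+ t\<in>{0..}. ennreal (exp (- (2 * Re l) * t)) \<partial>lborel)"
    by (rule nn_integral_cmult) measurable
  also have "\<dots> = ennreal ((cmod p)\<^sup>2) * ennreal (1 / (2 * Re l))"
    using exp_nn_integral[of "2 * Re l"] assms by (simp only: mult_pos_pos zero_less_numeral)
  also have "\<dots> = ennreal ((cmod p)\<^sup>2 / (2 * Re l))"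
    using ennreal_mult[of "(cmod p)\<^sup>2" "1 / (2 * Re l)"] assms by simp
  finally show ?thesis .
qed

lemma L2_exp_big:
  assumes "Re l \<le> 0" "N \<ge> 0"
  shows "ennreal ((cmod p)\<^sup>2 * N) \<le> L2_sq (\<lambda>t. exp (- l * complex_of_real t) * p)"
proof -
  have "ennreal ((cmod p)\<^sup>2 * N) = (\<integral>\<^sup>+ t. ennreal ((cmod p)\<^sup>2) * indicator {0..N} t \<partial>lborel)"
  proof -
    have "(\<integral>\<^sup>+ t. ennreal ((cmod p)\<^sup>2) * indicator {0..N} t \<partial>lborel) = ennreal ((cmod p)\<^sup>2) * emeasure lborel {0..N}"
      by (rule nn_integral_cmult_indicator) simp
    moreover have "emeasure lborel {0..N} = ennreal N" using assms by simp
    moreover have "ennreal ((cmod p)\<^sup>2 * N) = ennreal ((cmod p)\<^sup>2) * ennreal N"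
      by (rule ennreal_mult) (use assms in simp_all)
    ultimately show ?thesis by simp
  qed
  also have "\<dots> \<le> L2_sq (\<lambda>t. exp (- l * complex_of_real t) * p)"
    unfolding L2_sq_def
  proof (rule nn_integral_mono)
    fix t :: real
    show "ennreal ((cmod p)\<^sup>2) * indicator {0..N} t \<le>
          ennreal ((cmod (exp (- l * complex_of_real t) * p))\<^sup>2) * indicator {0..} t"
    proof (cases "t \<in> {0..N}")
      case True
      hence "1 \<le> exp (- (2 * Re l) * t)" using assms by (simp add: mult_nonneg_nonpos)
      hence "(cmod p)\<^sup>2 \<le> (cmod p)\<^sup>2 * exp (- (2 * Re l) * t)"
        by (metis mult_left_mono mult.right_neutral zero_le_power2)
      then show ?thesis using True unfolding cmod_exp_sq by (simp add: indicator_def)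
    qed (simp add: indicator_def)
  qed
  finally show ?thesis .
qed



locale setting =
  fixes sm :: "complex \<Rightarrow> 'a::banach \<Rightarrow> 'a" and ip :: "'a \<Rightarrow> 'a \<Rightarrow> complex"
    and A :: "'a \<Rightarrow> 'a" and \<phi> :: "nat \<Rightarrow> 'a" and lam :: "nat \<Rightarrow> complex" and b :: 'a
  assumes hilb: "complex_hilbert sm ip" and bdd: "bounded_cop sm A"
    and basis: "unconditional_basis sm \<phi>"
    and eig: "\<And>n. \<phi> n \<noteq> 0 \<and> A (\<phi> n) = sm (- lam n) (\<phi> n)"

context setting
begin

lemma comb_ip:
  "ip (expop A t (\<Sum>n\<in>F. sm (a n) (\<phi> n))) b =
   (\<Sum>n\<in>F. a n * (exp (- lam n * complex_of_real t) * ip (\<phi> n) b))"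
proof -
  have "ip (expop A t (\<Sum>n\<in>F. sm (a n) (\<phi> n))) b = (\<Sum>n\<in>F. ip (expop A t (sm (a n) (\<phi> n))) b)"
    by (simp only: expop_sum[OF hilb bdd] ip_sumL[OF hilb])
  also have "\<dots> = (\<Sum>n\<in>F. a n * (exp (- lam n * complex_of_real t) * ip (\<phi> n) b))"
    by (intro sum.cong refl) (simp only: expop_eig[OF hilb bdd conjunct2[OF eig]] ip_smL[OF hilb] mult.assoc)
  finally show ?thesis .
qed

lemma single_ip: "ip (expop A t (\<phi> n)) b = exp (- lam n * complex_of_real t) * ip (\<phi> n) b"
  using comb_ip[where t=t and F="{n}" and a="\<lambda>_. 1"] by (simp add: sm1[OF hilb])

lemma basis_bounds:
  "\<exists>b1 b2. b1 > 0 \<and> b2 > 0 \<and> (\<forall>F a. finite F \<longrightarrow>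
        b1 * (\<Sum>n\<in>F. (cmod (a n))\<^sup>2 * (norm (\<phi> n))\<^sup>2) \<le> (norm (\<Sum>n\<in>F. sm (a n) (\<phi> n)))\<^sup>2 \<and>
        (norm (\<Sum>n\<in>F. sm (a n) (\<phi> n)))\<^sup>2 \<le> b2 * (\<Sum>n\<in>F. (cmod (a n))\<^sup>2 * (norm (\<phi> n))\<^sup>2))"
  using basis unfolding unconditional_basis_def unconditional_seq_def by blast

lemma lam_bound: "\<exists>K. \<forall>n. cmod (lam n) \<le> K"
proof -
  obtain K where K: "K \<ge> 0" "\<And>x. norm (A x) \<le> K * norm x" using A_bound[OF hilb bdd] by blast
  have "cmod (lam n) \<le> K" for n
  proof -
    have "cmod (lam n) * norm (\<phi> n) = norm (A (\<phi> n))"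
      using eig[of n] by (simp add: norm_sm[OF hilb])
    also have "\<dots> \<le> K * norm (\<phi> n)" by (rule K(2))
    finally show ?thesis using eig[of n] by simp
  qed
  thus ?thesis by blast
qed

lemma span_repr:
  assumes "y \<in> cspan sm (range \<phi>)"
  shows "\<exists>F a. finite F \<and> y = (\<Sum>n\<in>F. sm (a n) (\<phi> n))"
proof -
  obtain G c where G: "finite G" "G \<subseteq> range \<phi>" "y = (\<Sum>v\<in>G. sm (c v) v)"
    using assms unfolding cspan_def by blast
  define F where "F = inv \<phi> ` G"
  have fi: "\<phi> (inv \<phi> v) = v" if "v \<in> G" for v
    using G(2) that by (meson f_inv_into_f subsetD)
  have inj: "inj_on \<phi> F"
  proof (rule inj_onI)
    fix n1 n2 assume "n1 \<in> F" "n2 \<in> F" and eq: "\<phi> n1 = \<phi> n2"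
    then obtain v1 v2 where v: "v1 \<in> G" "v2 \<in> G" "n1 = inv \<phi> v1" "n2 = inv \<phi> v2"
      unfolding F_def by blast
    then have "v1 = v2" using eq fi by metis
    then show "n1 = n2" using v by simp
  qed
  have img: "\<phi> ` F = G"
    unfolding F_def image_image using fi by (simp cong: image_cong)
  have "(\<Sum>n\<in>F. sm (c (\<phi> n)) (\<phi> n)) = (\<Sum>v\<in>\<phi> ` F. sm (c v) v)"
    by (rule sum.reindex[OF inj, symmetric, unfolded o_def])
  then have "y = (\<Sum>n\<in>F. sm (c (\<phi> n)) (\<phi> n))" using G(3) img by simp
  moreover have "finite F" unfolding F_def using G(1) by simp
  ultimately show ?thesis by (intro exI[of _ F] exI[of _ "\<lambda>n. c (\<phi> n)"]) simp
qed

lemma meas_span: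
  "(\<lambda>t. ip (expop A t (\<Sum>n\<in>F. sm (a n) (\<phi> n))) b) \<in> borel_measurable borel"
  unfolding comb_ip
  by (intro borel_measurable_continuous_onI continuous_intros)

lemma ip_cont: "x \<longlonglongrightarrow> y \<Longrightarrow> (\<lambda>k. ip (x k) z) \<longlonglongrightarrow> ip y z"
proof -
  assume xy: "x \<longlonglongrightarrow> y"
  have "(\<lambda>k. norm (x k - y)) \<longlonglongrightarrow> 0"
    using xy by (simp add: LIM_zero_iff tendsto_norm_zero)
  hence "(\<lambda>k. norm (x k - y) * norm z) \<longlonglongrightarrow> 0 * norm z"
    by (intro tendsto_intros)
  hence g0: "(\<lambda>k. norm (x k - y) * norm z) \<longlonglongrightarrow> 0" by simp
  have "norm (ip (x k) z - ip y z) \<le> norm (x k - y) * norm z" for k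
    using cs[OF hilb, of "x k - y" z] by (simp add: ip_diffL[OF hilb])
  hence "(\<lambda>k. ip (x k) z - ip y z) \<longlonglongrightarrow> 0"
    by (intro Lim_null_comparison[OF _ g0] always_eventually) auto
  thus ?thesis by (simp add: LIM_zero_iff)
qed

lemma dense_seq: "\<exists>x. (\<forall>k. \<exists>F a. finite F \<and> x k = (\<Sum>n\<in>F. sm (a n) (\<phi> n))) \<and> x \<longlonglongrightarrow> y"
proof -
  have "y \<in> closure (cspan sm (range \<phi>))"
    using basis unfolding unconditional_basis_def by simp
  then obtain x where x: "\<And>k. x k \<in> cspan sm (range \<phi>)" "x \<longlonglongrightarrow> y"
    unfolding closure_sequential by blast
  have "\<forall>k. \<exists>F a. finite F \<and> x k = (\<Sum>n\<in>F. sm (a n) (\<phi> n))"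
    using span_repr[OF x(1)] by blast
  with x(2) show ?thesis by blast
qed

lemma meas_all: "(\<lambda>t. ip (expop A t y) b) \<in> borel_measurable borel"
proof -
  obtain x where x: "\<And>k. \<exists>F a. finite F \<and> x k = (\<Sum>n\<in>F. sm (a n) (\<phi> n))" "x \<longlonglongrightarrow> y"
    using dense_seq by blast
  have m: "(\<lambda>t. ip (expop A t (x k)) b) \<in> borel_measurable borel" for k
  proof -
    obtain F a where "x k = (\<Sum>n\<in>F. sm (a n) (\<phi> n))" using x(1)[of k] by blast
    then show ?thesis using meas_span[where F=F and a=a] by simp
  qed
  show ?thesis
    by (rule borel_measurable_LIMSEQ_metric[OF m]) (rule ip_cont, rule expop_cont[OF hilb bdd x(2)])
qed

lemma meas_int: "(\<lambda>t. ennreal ((cmod (ip (expop A t y) b))\<^sup>2) * indicator {0..} t) \<in> borel_measurable lborel"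
proof -
  have [measurable]: "(\<lambda>t. ip (expop A t y) b) \<in> borel_measurable borel" by (rule meas_all)
  show ?thesis by measurable
qed

end


lemma ratio_sq:
  assumes "N > 0" "R > 0"
  shows "(q / (N * sqrt (2 * R)))\<^sup>2 = (q\<^sup>2 / (2 * R)) / N\<^sup>2"
  using assms by (simp add: power_divide power_mult_distrib field_simps)

lemma ennreal_ind: "ennreal a * indicator S t = ennreal (a * indicator S t)"
  by (simp add: indicator_def)

context setting
begin

abbreviation Ob :: "'a \<Rightarrow> ennreal" where
  "Ob y \<equiv> (\<integral>\<^sup>+ t \<in> {0..}. ennreal ((cmod (ip (expop A t y) b))\<^sup>2) \<partial>lborel)"

lemma cmod_ip_swap: "cmod (ip b (\<phi> n)) = cmod (ip (\<phi> n) b)"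
  by (subst ip_cnj[OF hilb]) simp

lemma Ob_comb: "Ob (\<Sum>n\<in>F. sm (a n) (\<phi> n)) =
   L2_sq (\<lambda>t. \<Sum>n\<in>F. a n * (exp (- lam n * complex_of_real t) * ip (\<phi> n) b))"
  unfolding L2_sq_def comb_ip ..

lemma Ob_single: "Ob (\<phi> n) = L2_sq (\<lambda>t. exp (- lam n * complex_of_real t) * ip (\<phi> n) b)"
  unfolding L2_sq_def single_ip ..

lemma fatou_upper:
  assumes span: "\<And>F a. finite F \<Longrightarrow> Ob (\<Sum>n\<in>F. sm (a n) (\<phi> n)) \<le> ennreal (C * (norm (\<Sum>n\<in>F. sm (a n) (\<phi> n)))\<^sup>2)"
  shows "Ob y \<le> ennreal (C * (norm y)\<^sup>2)"
proof -
  obtain x where x: "\<And>k. \<exists>F a. finite F \<and> x k = (\<Sum>n\<in>F. sm (a n) (\<phi> n))" "x \<longlonglongrightarrow> y"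
    using dense_seq by blast
  have xb: "Ob (x k) \<le> ennreal (C * (norm (x k))\<^sup>2)" for k
  proof -
    obtain F a where "finite F" "x k = (\<Sum>n\<in>F. sm (a n) (\<phi> n))" using x(1)[of k] by blast
    then show ?thesis using span by simp
  qed
  define u where "u k t = ennreal ((cmod (ip (expop A t (x k)) b))\<^sup>2) * indicator {0..} t" for k t
  define v where "v t = ennreal ((cmod (ip (expop A t y) b))\<^sup>2) * indicator {0..} t" for t
  have conv: "(\<lambda>k. u k t) \<longlonglongrightarrow> v t" for t
  proof -
    have "(\<lambda>k. ip (expop A t (x k)) b) \<longlonglongrightarrow> ip (expop A t y) b"
      by (rule ip_cont, rule expop_cont[OF hilb bdd x(2)])
    hence "(\<lambda>k. (cmod (ip (expop A t (x k)) b))\<^sup>2 * indicator {0..} t) \<longlonglongrightarrow>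
           (cmod (ip (expop A t y) b))\<^sup>2 * indicator {0..} t"
      by (intro tendsto_intros)
    hence "(\<lambda>k. ennreal ((cmod (ip (expop A t (x k)) b))\<^sup>2 * indicator {0..} t)) \<longlonglongrightarrow>
           ennreal ((cmod (ip (expop A t y) b))\<^sup>2 * indicator {0..} t)"
      by (rule tendsto_ennrealI)
    thus ?thesis unfolding u_def v_def ennreal_ind .
  qed
  have lv: "liminf (\<lambda>k. u k t) = v t" for t
    by (rule lim_imp_Liminf[OF _ conv]) simp
  have "Ob y = (\<integral>\<^sup>+ t. v t \<partial>lborel)" unfolding v_def ..
  also have "\<dots> = (\<integral>\<^sup>+ t. liminf (\<lambda>k. u k t) \<partial>lborel)"
    by (simp only: lv)
  also have "\<dots> \<le> liminf (\<lambda>k. integral\<^sup>N lborel (u k))"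
    by (rule nn_integral_liminf) (simp only: u_def meas_int)
  also have "\<dots> \<le> liminf (\<lambda>k. ennreal (C * (norm (x k))\<^sup>2))"
  proof (rule Liminf_mono, rule always_eventually, rule allI)
    fix k
    have "integral\<^sup>N lborel (u k) = Ob (x k)" unfolding u_def ..
    then show "integral\<^sup>N lborel (u k) \<le> ennreal (C * (norm (x k))\<^sup>2)" using xb[of k] by simp
  qed
  also have "\<dots> = ennreal (C * (norm y)\<^sup>2)"
  proof (rule lim_imp_Liminf)
    show "(\<lambda>k. ennreal (C * (norm (x k))\<^sup>2)) \<longlonglongrightarrow> ennreal (C * (norm y)\<^sup>2)"
      by (intro tendsto_intros x(2))
  qed simp
  finally show ?thesis .
qed

lemma sq_tri: "(cmod u)\<^sup>2 \<le> 2 * (cmod v)\<^sup>2 + 2 * (cmod (u - v))\<^sup>2"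
proof -
  have "cmod u \<le> cmod v + cmod (u - v)" by (metis add.commute diff_add_cancel norm_triangle_ineq)
  hence "(cmod u)\<^sup>2 \<le> (cmod v + cmod (u - v))\<^sup>2" by (simp add: power_mono)
  also have "\<dots> \<le> 2 * (cmod v)\<^sup>2 + 2 * (cmod (u - v))\<^sup>2"
    using sum_squares_ge_zero[of "cmod v - cmod (u - v)" 0]
    by (simp add: power2_eq_square algebra_simps)
  finally show ?thesis .
qed

lemma Ob_tri: "Ob z \<le> 2 * Ob y + 2 * Ob (z - y)"
proof -
  have "Ob z \<le> (\<integral>\<^sup>+ t. 2 * (ennreal ((cmod (ip (expop A t y) b))\<^sup>2) * indicator {0..} t) +
                      2 * (ennreal ((cmod (ip (expop A t (z - y)) b))\<^sup>2) * indicator {0..} t) \<partial>lborel)"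
  proof (rule nn_integral_mono)
    fix t :: real
    let ?u = "ip (expop A t z) b" and ?v = "ip (expop A t y) b"
    have d: "ip (expop A t (z - y)) b = ?u - ?v"
      by (simp only: expop_diff[OF hilb bdd] ip_diffL[OF hilb])
    have le: "(cmod ?u)\<^sup>2 \<le> 2 * (cmod ?v)\<^sup>2 + 2 * (cmod (?u - ?v))\<^sup>2" by (rule sq_tri)
    have "ennreal ((cmod ?u)\<^sup>2) \<le> ennreal (2 * (cmod ?v)\<^sup>2 + 2 * (cmod (?u - ?v))\<^sup>2)"
      using le by (rule ennreal_leI)
    also have "\<dots> = 2 * ennreal ((cmod ?v)\<^sup>2) + 2 * ennreal ((cmod (?u - ?v))\<^sup>2)"
      by (simp add: ennreal_plus ennreal_mult')
    finally have "ennreal ((cmod ?u)\<^sup>2) \<le> 2 * ennreal ((cmod ?v)\<^sup>2) + 2 * ennreal ((cmod (?u - ?v))\<^sup>2)" .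
    then show "ennreal ((cmod ?u)\<^sup>2) * indicator {0..} t \<le>
          2 * (ennreal ((cmod ?v)\<^sup>2) * indicator {0..} t) +
          2 * (ennreal ((cmod (ip (expop A t (z - y)) b))\<^sup>2) * indicator {0..} t)"
      unfolding d by (simp add: indicator_def)
  qed
  also have "\<dots> = (\<integral>\<^sup>+ t. 2 * (ennreal ((cmod (ip (expop A t y) b))\<^sup>2) * indicator {0..} t) \<partial>lborel) +
                  (\<integral>\<^sup>+ t. 2 * (ennreal ((cmod (ip (expop A t (z - y)) b))\<^sup>2) * indicator {0..} t) \<partial>lborel)"
  proof (rule nn_integral_add)
    have [measurable]: "(\<lambda>t. ennreal ((cmod (ip (expop A t y) b))\<^sup>2) * indicator {0..} t) \<in> borel_measurable borel"
      "(\<lambda>t. ennreal ((cmod (ip (expop A t (z - y)) b))\<^sup>2) * indicator {0..} t) \<in> borel_measurable borel"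
      using meas_int by simp_all
    show "(\<lambda>t. 2 * (ennreal ((cmod (ip (expop A t y) b))\<^sup>2) * indicator {0..} t)) \<in> borel_measurable lborel"
      by measurable
    show "(\<lambda>t. 2 * (ennreal ((cmod (ip (expop A t (z - y)) b))\<^sup>2) * indicator {0..} t)) \<in> borel_measurable lborel"
      by measurable
  qed
  also have "\<dots> = 2 * Ob y + 2 * Ob (z - y)"
    by (simp only: nn_integral_cmult[OF meas_int])
  finally show ?thesis .
qed

lemma lower_ext:
  assumes span: "\<And>F a. finite F \<Longrightarrow> ennreal (C1 * (norm (\<Sum>n\<in>F. sm (a n) (\<phi> n)))\<^sup>2) \<le> Ob (\<Sum>n\<in>F. sm (a n) (\<phi> n))"
    and up: "\<And>z. Ob z \<le> ennreal (C2 * (norm z)\<^sup>2)" and C2: "C2 \<ge> 0"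
  shows "ennreal (C1 / 2 * (norm y)\<^sup>2) \<le> Ob y"
proof (cases "Ob y = \<infinity>")
  case True then show ?thesis by simp
next
  case False
  then obtain r where r: "Ob y = ennreal r" "r \<ge> 0" by (cases "Ob y") auto
  obtain x where x: "\<And>k. \<exists>F a. finite F \<and> x k = (\<Sum>n\<in>F. sm (a n) (\<phi> n))" "x \<longlonglongrightarrow> y"
    using dense_seq by blast
  have xb: "ennreal (C1 * (norm (x k))\<^sup>2) \<le> Ob (x k)" for k
  proof -
    obtain F a where "finite F" "x k = (\<Sum>n\<in>F. sm (a n) (\<phi> n))" using x(1)[of k] by blast
    then show ?thesis using span by simp
  qed
  have ineq: "C1 * (norm (x k))\<^sup>2 \<le> 2 * r + 2 * (C2 * (norm (x k - y))\<^sup>2)" for k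
  proof -
    have "ennreal (C1 * (norm (x k))\<^sup>2) \<le> 2 * Ob y + 2 * Ob (x k - y)"
      using xb[of k] Ob_tri[of "x k" y] by (rule order_trans)
    also have "\<dots> \<le> 2 * ennreal r + 2 * ennreal (C2 * (norm (x k - y))\<^sup>2)"
      using up[of "x k - y"] r(1) by (intro add_mono mult_left_mono) auto
    also have "\<dots> = ennreal (2 * r + 2 * (C2 * (norm (x k - y))\<^sup>2))"
      using r(2) C2 by (simp add: ennreal_plus ennreal_mult')
    finally show ?thesis
      using r(2) C2 by (subst (asm) ennreal_le_iff) auto
  qed
  have l1: "(\<lambda>k. C1 * (norm (x k))\<^sup>2) \<longlonglongrightarrow> C1 * (norm y)\<^sup>2"
    by (intro tendsto_intros x(2))
  have "(\<lambda>k. norm (x k - y)) \<longlonglongrightarrow> 0"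
    using x(2) by (simp add: LIM_zero_iff tendsto_norm_zero)
  hence "(\<lambda>k. 2 * r + 2 * (C2 * (norm (x k - y))\<^sup>2)) \<longlonglongrightarrow> 2 * r + 2 * (C2 * 0\<^sup>2)"
    by (intro tendsto_intros)
  hence l2: "(\<lambda>k. 2 * r + 2 * (C2 * (norm (x k - y))\<^sup>2)) \<longlonglongrightarrow> 2 * r" by simp
  have "C1 * (norm y)\<^sup>2 \<le> 2 * r"
    using l1 l2 ineq by (intro LIMSEQ_le) auto
  hence "C1 / 2 * (norm y)\<^sup>2 \<le> r" by simp
  then show ?thesis using r(1) by (simp add: ennreal_leI)
qed

lemma suff_span:
  assumes pos: "\<forall>n. Re (lam n) > 0"
    and unc: "unconditional_seq_L2 (\<lambda>n t. exp (- lam n * complex_of_real t) * ip (\<phi> n) b)"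
    and rat: "\<exists>c1 c2. 0 < c1 \<and> c1 \<le> c2 \<and> (\<forall>n.
        c1 \<le> cmod (ip b (\<phi> n)) / (norm (\<phi> n) * sqrt (2 * Re (lam n))) \<and>
        cmod (ip b (\<phi> n)) / (norm (\<phi> n) * sqrt (2 * Re (lam n))) \<le> c2)"
  shows "\<exists>C1 C2. C1 > 0 \<and> C2 > 0 \<and> (\<forall>F a. finite F \<longrightarrow>
      ennreal (C1 * (norm (\<Sum>n\<in>F. sm (a n) (\<phi> n)))\<^sup>2) \<le> Ob (\<Sum>n\<in>F. sm (a n) (\<phi> n)) \<and>
      Ob (\<Sum>n\<in>F. sm (a n) (\<phi> n)) \<le> ennreal (C2 * (norm (\<Sum>n\<in>F. sm (a n) (\<phi> n)))\<^sup>2))"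
proof -
  obtain d1 d2 where d: "d1 > 0" "d2 > 0" and dF: "\<And>F a. finite F \<Longrightarrow>
        d1 * (\<Sum>n\<in>F. (cmod (a n))\<^sup>2 * enn2real (L2_sq (\<lambda>t. exp (- lam n * complex_of_real t) * ip (\<phi> n) b)))
          \<le> enn2real (L2_sq (\<lambda>t. \<Sum>n\<in>F. a n * (exp (- lam n * complex_of_real t) * ip (\<phi> n) b))) \<and>
        enn2real (L2_sq (\<lambda>t. \<Sum>n\<in>F. a n * (exp (- lam n * complex_of_real t) * ip (\<phi> n) b)))
          \<le> d2 * (\<Sum>n\<in>F. (cmod (a n))\<^sup>2 * enn2real (L2_sq (\<lambda>t. exp (- lam n * complex_of_real t) * ip (\<phi> n) b)))"
    using unc unfolding unconditional_seq_L2_def by blast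
  obtain c1 c2 where c: "0 < c1" "c1 \<le> c2" and cn: "\<And>n.
        c1 \<le> cmod (ip b (\<phi> n)) / (norm (\<phi> n) * sqrt (2 * Re (lam n))) \<and>
        cmod (ip b (\<phi> n)) / (norm (\<phi> n) * sqrt (2 * Re (lam n))) \<le> c2"
    using rat by blast
  obtain b1 b2 where bb: "b1 > 0" "b2 > 0" and bF: "\<And>F a. finite F \<Longrightarrow>
        b1 * (\<Sum>n\<in>F. (cmod (a n))\<^sup>2 * (norm (\<phi> n))\<^sup>2) \<le> (norm (\<Sum>n\<in>F. sm (a n) (\<phi> n)))\<^sup>2 \<and>
        (norm (\<Sum>n\<in>F. sm (a n) (\<phi> n)))\<^sup>2 \<le> b2 * (\<Sum>n\<in>F. (cmod (a n))\<^sup>2 * (norm (\<phi> n))\<^sup>2)"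
    using basis_bounds by blast
  define e where "e n = (cmod (ip (\<phi> n) b))\<^sup>2 / (2 * Re (lam n))" for n
  have e_nn: "e n \<ge> 0" for n using pos[rule_format, of n] unfolding e_def
    by (intro divide_nonneg_pos) simp_all
  have L2E: "enn2real (L2_sq (\<lambda>t. exp (- lam n * complex_of_real t) * ip (\<phi> n) b)) = e n" for n
    using L2_exp[of "lam n" "ip (\<phi> n) b"] pos e_nn[of n] unfolding e_def by simp
  have nphi: "norm (\<phi> n) > 0" for n using eig[of n] by simp
  have e_eq: "e n = (cmod (ip b (\<phi> n)) / (norm (\<phi> n) * sqrt (2 * Re (lam n))))\<^sup>2 * (norm (\<phi> n))\<^sup>2" for n
    using ratio_sq[OF nphi[of n], of "Re (lam n)" "cmod (ip b (\<phi> n))"] pos nphi[of n]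
    unfolding e_def cmod_ip_swap by simp
  have e_lo: "c1\<^sup>2 * (norm (\<phi> n))\<^sup>2 \<le> e n" for n
  proof -
    have "c1\<^sup>2 \<le> (cmod (ip b (\<phi> n)) / (norm (\<phi> n) * sqrt (2 * Re (lam n))))\<^sup>2"
      using cn[of n] c(1) by (intro power_mono) auto
    then show ?thesis unfolding e_eq by (intro mult_right_mono) auto
  qed
  have e_hi: "e n \<le> c2\<^sup>2 * (norm (\<phi> n))\<^sup>2" for n
  proof -
    have "0 \<le> cmod (ip b (\<phi> n)) / (norm (\<phi> n) * sqrt (2 * Re (lam n)))"
      using cn[of n] c(1) by linarith
    hence "(cmod (ip b (\<phi> n)) / (norm (\<phi> n) * sqrt (2 * Re (lam n))))\<^sup>2 \<le> c2\<^sup>2"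
      using cn[of n] by (intro power_mono) auto
    then show ?thesis unfolding e_eq by (intro mult_right_mono) auto
  qed
  have e_pos: "e n > 0" for n
  proof -
    have "0 < c1\<^sup>2 * (norm (\<phi> n))\<^sup>2" using c(1) nphi[of n] by simp
    thus ?thesis using e_lo[of n] by linarith
  qed
  define C1 where "C1 = c1\<^sup>2 * d1 / b2"
  define C2 where "C2 = d2 * c2\<^sup>2 / b1"
  have C1: "C1 > 0" unfolding C1_def using c d bb by simp
  have C2: "C2 > 0" unfolding C2_def using c d bb by simp
  have main: "ennreal (C1 * (norm (\<Sum>n\<in>F. sm (a n) (\<phi> n)))\<^sup>2) \<le> Ob (\<Sum>n\<in>F. sm (a n) (\<phi> n)) \<and>
      Ob (\<Sum>n\<in>F. sm (a n) (\<phi> n)) \<le> ennreal (C2 * (norm (\<Sum>n\<in>F. sm (a n) (\<phi> n)))\<^sup>2)"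
    if F: "finite F" for F a
  proof -
    define x where "x = (\<Sum>n\<in>F. sm (a n) (\<phi> n))"
    define S where "S = (\<Sum>n\<in>F. (cmod (a n))\<^sup>2 * (norm (\<phi> n))\<^sup>2)"
    define T where "T = (\<Sum>n\<in>F. (cmod (a n))\<^sup>2 * e n)"
    define L where "L = L2_sq (\<lambda>t. \<Sum>n\<in>F. a n * (exp (- lam n * complex_of_real t) * ip (\<phi> n) b))"
    have ObL: "Ob x = L" unfolding x_def L_def by (rule Ob_comb)
    have TS1: "c1\<^sup>2 * S \<le> T" unfolding S_def T_def sum_distrib_left
    proof (intro sum_mono)
      fix n
      have "(cmod (a n))\<^sup>2 * (c1\<^sup>2 * (norm (\<phi> n))\<^sup>2) \<le> (cmod (a n))\<^sup>2 * e n"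
        by (rule mult_left_mono[OF e_lo]) simp
      thus "c1\<^sup>2 * ((cmod (a n))\<^sup>2 * (norm (\<phi> n))\<^sup>2) \<le> (cmod (a n))\<^sup>2 * e n" by (simp add: mult_ac)
    qed
    have TS2: "T \<le> c2\<^sup>2 * S" unfolding S_def T_def sum_distrib_left
    proof (intro sum_mono)
      fix n
      have "(cmod (a n))\<^sup>2 * e n \<le> (cmod (a n))\<^sup>2 * (c2\<^sup>2 * (norm (\<phi> n))\<^sup>2)"
        by (rule mult_left_mono[OF e_hi]) simp
      thus "(cmod (a n))\<^sup>2 * e n \<le> c2\<^sup>2 * ((cmod (a n))\<^sup>2 * (norm (\<phi> n))\<^sup>2)" by (simp add: mult_ac)
    qed
    have dT: "d1 * T \<le> enn2real L" "enn2real L \<le> d2 * T"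
      using dF[OF F, of a] unfolding L_def T_def L2E by auto
    have bS: "b1 * S \<le> (norm x)\<^sup>2" "(norm x)\<^sup>2 \<le> b2 * S"
      using bF[OF F, of a] unfolding x_def S_def by auto
    have S_nn: "S \<ge> 0" unfolding S_def by (intro sum_nonneg) simp
    have T_nn: "T \<ge> 0" unfolding T_def using e_nn by (intro sum_nonneg) simp
    have Lfin: "L \<noteq> \<infinity>"
    proof
      assume Linf: "L = \<infinity>"
      hence "d1 * T \<le> 0" using dT(1) by simp
      hence "T = 0" using d(1) T_nn by (simp add: mult_le_0_iff)
      hence "\<forall>n\<in>F. (cmod (a n))\<^sup>2 * e n = 0"
        unfolding T_def using F e_nn by (subst (asm) sum_nonneg_eq_0_iff) auto
      hence a0: "\<forall>n\<in>F. a n = 0" using e_pos by (metis less_irrefl mult_eq_0_iff norm_eq_zero zero_eq_power2)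
      have "L = L2_sq (\<lambda>t. 0)" unfolding L_def using a0 by simp
      also have "\<dots> = 0" unfolding L2_sq_def by simp
      finally show False using Linf by simp
    qed
    then obtain Lr where Lr: "L = ennreal Lr" "Lr \<ge> 0" by (cases L) auto
    have eL: "enn2real L = Lr" using Lr by simp
    have low: "C1 * (norm x)\<^sup>2 \<le> Lr"
    proof -
      have "C1 * (norm x)\<^sup>2 \<le> C1 * (b2 * S)" using bS(2) C1 by (intro mult_left_mono) auto
      also have "\<dots> = d1 * (c1\<^sup>2 * S)" unfolding C1_def using bb by (simp add: field_simps)
      also have "\<dots> \<le> d1 * T" using TS1 d by (intro mult_left_mono) auto
      also have "\<dots> \<le> Lr" using dT(1) eL by simp
      finally show ?thesis .
    qed
    have high: "Lr \<le> C2 * (norm x)\<^sup>2"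
    proof -
      have "Lr \<le> d2 * T" using dT(2) eL by simp
      also have "\<dots> \<le> d2 * (c2\<^sup>2 * S)" using TS2 d by (intro mult_left_mono) auto
      also have "\<dots> = C2 * (b1 * S)" unfolding C2_def using bb by (simp add: field_simps)
      also have "\<dots> \<le> C2 * (norm x)\<^sup>2" using bS(1) C2 by (intro mult_left_mono) auto
      finally show ?thesis .
    qed
    show ?thesis unfolding x_def[symmetric] ObL Lr(1) using low high by (simp add: ennreal_leI)
  qed
  show ?thesis using C1 C2 main by blast
qed

lemma suff:
  assumes pos: "\<forall>n. Re (lam n) > 0"
    and unc: "unconditional_seq_L2 (\<lambda>n t. exp (- lam n * complex_of_real t) * ip (\<phi> n) b)"
    and rat: "\<exists>c1 c2. 0 < c1 \<and> c1 \<le> c2 \<and> (\<forall>n.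
        c1 \<le> cmod (ip b (\<phi> n)) / (norm (\<phi> n) * sqrt (2 * Re (lam n))) \<and>
        cmod (ip b (\<phi> n)) / (norm (\<phi> n) * sqrt (2 * Re (lam n))) \<le> c2)"
  shows "exactly_observable ip A b"
proof -
  obtain C1 C2 where C: "C1 > 0" "C2 > 0" and CF: "\<And>F a. finite F \<Longrightarrow>
      ennreal (C1 * (norm (\<Sum>n\<in>F. sm (a n) (\<phi> n)))\<^sup>2) \<le> Ob (\<Sum>n\<in>F. sm (a n) (\<phi> n)) \<and>
      Ob (\<Sum>n\<in>F. sm (a n) (\<phi> n)) \<le> ennreal (C2 * (norm (\<Sum>n\<in>F. sm (a n) (\<phi> n)))\<^sup>2)"
    using suff_span[OF pos unc rat] by blast
  have up: "Ob z \<le> ennreal (C2 * (norm z)\<^sup>2)" for z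
    by (rule fatou_upper) (use CF in blast)
  have lo: "ennreal (C1 / 2 * (norm z)\<^sup>2) \<le> Ob z" for z
    by (rule lower_ext[OF _ up]) (use CF C in auto)
  show ?thesis unfolding exactly_observable_def
    by (intro exI[of _ "C1 / 2"] exI[of _ C2]) (use C up lo in auto)
qed

end


lemma exp_minus_one_bound: "cmod (exp z - 1) \<le> exp (cmod z) * cmod z"
  using Taylor_exp_field[of z 0] by simp

lemma t2_bound:
  fixes \<delta> t :: real
  assumes "\<delta> > 0" "t \<ge> 0"
  shows "t\<^sup>2 * exp (- \<delta> * t) \<le> (16 / \<delta>\<^sup>2) * exp (- (\<delta> / 2) * t)"
proof -
  have "\<delta> * t / 4 \<le> exp (\<delta> * t / 4)"
    using exp_ge_add_one_self[of "\<delta> * t / 4"] by linarith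
  moreover have "0 \<le> \<delta> * t / 4" using assms by simp
  ultimately have "(\<delta> * t / 4)\<^sup>2 \<le> (exp (\<delta> * t / 4))\<^sup>2" by (rule power_mono)
  also have "(exp (\<delta> * t / 4))\<^sup>2 = exp (\<delta> * t / 2)"
    by (simp add: power2_eq_square exp_add[symmetric])
  finally have "\<delta>\<^sup>2 * t\<^sup>2 / 16 \<le> exp (\<delta> * t / 2)" by (simp add: power_divide power_mult_distrib)
  hence "t\<^sup>2 \<le> (16 / \<delta>\<^sup>2) * exp (\<delta> * t / 2)" using assms by (simp add: field_simps)
  hence "t\<^sup>2 * exp (- \<delta> * t) \<le> (16 / \<delta>\<^sup>2) * exp (\<delta> * t / 2) * exp (- \<delta> * t)"
    by (rule mult_right_mono) simp
  also have "\<dots> = (16 / \<delta>\<^sup>2) * exp (- (\<delta> / 2) * t)"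
    by (simp add: mult.assoc exp_add[symmetric])
  finally show ?thesis .
qed

lemma exp_diff_pointwise:
  assumes d: "\<delta> > 0" "Re l1 \<ge> \<delta>" "Re l2 \<ge> \<delta>" "cmod (l1 - l2) \<le> \<delta> / 2" and t: "t \<ge> 0"
  shows "(cmod (exp (- l1 * complex_of_real t) - exp (- l2 * complex_of_real t)))\<^sup>2
          \<le> (16 * (cmod (l1 - l2))\<^sup>2 / \<delta>\<^sup>2) * exp (- (\<delta> / 2) * t)"
proof -
  define z where "z = - (l1 - l2) * complex_of_real t"
  define dd where "dd = cmod (l1 - l2)"
  have eq: "exp (- l1 * complex_of_real t) - exp (- l2 * complex_of_real t) = exp (- l2 * complex_of_real t) * (exp z - 1)"
    unfolding z_def by (simp add: algebra_simps exp_add[symmetric])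
  have cz: "cmod z = dd * t" unfolding z_def dd_def using t by (simp add: norm_mult norm_minus_commute)
  have "cmod (exp (- l2 * complex_of_real t)) = exp (- Re l2 * t)" by (simp add: norm_exp_eq_Re)
  also have "\<dots> \<le> exp (- \<delta> * t)" using d t by (simp add: mult_right_mono)
  finally have e2: "cmod (exp (- l2 * complex_of_real t)) \<le> exp (- \<delta> * t)" .
  have "cmod (exp z - 1) \<le> exp (dd * t) * (dd * t)" using exp_minus_one_bound[of z] cz by simp
  also have "\<dots> \<le> exp (\<delta> / 2 * t) * (dd * t)"
  proof -
    have dt: "dd * t \<le> \<delta> / 2 * t" using d(4) t unfolding dd_def by (rule mult_right_mono)
    show ?thesis by (intro mult_right_mono) (use dt t in \<open>simp_all add: dd_def\<close>)
  qed
  finally have e1: "cmod (exp z - 1) \<le> exp (\<delta> / 2 * t) * (dd * t)" .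
  have "cmod (exp (- l1 * complex_of_real t) - exp (- l2 * complex_of_real t)) \<le> exp (- \<delta> * t) * (exp (\<delta> / 2 * t) * (dd * t))"
    unfolding eq norm_mult by (intro mult_mono e1 e2) auto
  also have "\<dots> = dd * t * exp (- (\<delta> / 2) * t)"
    by (simp add: exp_add[symmetric] algebra_simps)
  finally have b1: "cmod (exp (- l1 * complex_of_real t) - exp (- l2 * complex_of_real t)) \<le> dd * t * exp (- (\<delta> / 2) * t)" .
  have "(cmod (exp (- l1 * complex_of_real t) - exp (- l2 * complex_of_real t)))\<^sup>2 \<le> (dd * t * exp (- (\<delta> / 2) * t))\<^sup>2"
    using b1 by (intro power_mono) auto
  also have "\<dots> = dd\<^sup>2 * (t\<^sup>2 * exp (- \<delta> * t))"
    by (simp add: power_mult_distrib power2_eq_square exp_add[symmetric] algebra_simps)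
  also have "\<dots> \<le> dd\<^sup>2 * ((16 / \<delta>\<^sup>2) * exp (- (\<delta> / 2) * t))"
    by (intro mult_left_mono t2_bound d(1) t) simp
  also have "\<dots> = (16 * dd\<^sup>2 / \<delta>\<^sup>2) * exp (- (\<delta> / 2) * t)" by simp
  finally show ?thesis unfolding dd_def .
qed

lemma exp_diff_L2:
  assumes d: "\<delta> > 0" "Re l1 \<ge> \<delta>" "Re l2 \<ge> \<delta>" "cmod (l1 - l2) \<le> \<delta> / 2"
  shows "L2_sq (\<lambda>t. exp (- l1 * complex_of_real t) - exp (- l2 * complex_of_real t))
          \<le> ennreal (32 * (cmod (l1 - l2))\<^sup>2 / \<delta> ^ 3)"
proof -
  let ?c = "16 * (cmod (l1 - l2))\<^sup>2 / \<delta>\<^sup>2"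
  have "L2_sq (\<lambda>t. exp (- l1 * complex_of_real t) - exp (- l2 * complex_of_real t))
        \<le> (\<integral>\<^sup>+ t. ennreal ?c * (ennreal (exp (- (\<delta> / 2) * t)) * indicator {0..} t) \<partial>lborel)"
    unfolding L2_sq_def
  proof (rule nn_integral_mono)
    fix t :: real
    show "ennreal ((cmod (exp (- l1 * complex_of_real t) - exp (- l2 * complex_of_real t)))\<^sup>2) * indicator {0..} t
        \<le> ennreal ?c * (ennreal (exp (- (\<delta> / 2) * t)) * indicator {0..} t)"
    proof (cases "t \<ge> 0")
      case True
      have "ennreal ((cmod (exp (- l1 * complex_of_real t) - exp (- l2 * complex_of_real t)))\<^sup>2)
            \<le> ennreal (?c * exp (- (\<delta> / 2) * t))"
        by (intro ennreal_leI exp_diff_pointwise[OF d True])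
      also have "\<dots> = ennreal ?c * ennreal (exp (- (\<delta> / 2) * t))"
        by (rule ennreal_mult) simp_all
      finally show ?thesis using True by (simp add: indicator_def)
    qed (simp add: indicator_def)
  qed
  also have "\<dots> = ennreal ?c * (\<integral>\<^sup>+ t\<in>{0..}. ennreal (exp (- (\<delta> / 2) * t)) \<partial>lborel)"
    by (rule nn_integral_cmult) measurable
  also have "(\<integral>\<^sup>+ t\<in>{0..}. ennreal (exp (- (\<delta> / 2) * t)) \<partial>lborel) = ennreal (1 / (\<delta> / 2))"
    by (rule exp_nn_integral) (use d in simp)
  also have "ennreal ?c * ennreal (1 / (\<delta> / 2)) = ennreal (?c * (1 / (\<delta> / 2)))"
    by (rule ennreal_mult[symmetric]) (use d in simp_all)
  also have "?c * (1 / (\<delta> / 2)) = 32 * (cmod (l1 - l2))\<^sup>2 / \<delta> ^ 3"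
    using d by (simp add: field_simps power2_eq_square power3_eq_cube)
  finally show ?thesis .
qed

context setting
begin

lemma nec:
  assumes obs: "exactly_observable ip A b"
  shows "(\<forall>n. Re (lam n) > 0) \<and>
     (\<lambda>n. Re (lam n)) \<longlonglongrightarrow> 0 \<and>
     unconditional_seq_L2 (\<lambda>n t. exp (- lam n * complex_of_real t) * ip (\<phi> n) b) \<and>
     (\<exists>c1 c2. 0 < c1 \<and> c1 \<le> c2 \<and> (\<forall>n.
        c1 \<le> cmod (ip b (\<phi> n)) / (norm (\<phi> n) * sqrt (2 * Re (lam n))) \<and>
        cmod (ip b (\<phi> n)) / (norm (\<phi> n) * sqrt (2 * Re (lam n))) \<le> c2))"
proof -
  obtain o1 o2 where o: "o1 > 0" "o2 > 0" and ob: "\<And>x. ennreal (o1 * (norm x)\<^sup>2) \<le> Ob x \<and> Ob x \<le> ennreal (o2 * (norm x)\<^sup>2)"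
    using obs unfolding exactly_observable_def by blast
  obtain b1 b2 where bb: "b1 > 0" "b2 > 0" and bF: "\<And>F a. finite F \<Longrightarrow>
        b1 * (\<Sum>n\<in>F. (cmod (a n))\<^sup>2 * (norm (\<phi> n))\<^sup>2) \<le> (norm (\<Sum>n\<in>F. sm (a n) (\<phi> n)))\<^sup>2 \<and>
        (norm (\<Sum>n\<in>F. sm (a n) (\<phi> n)))\<^sup>2 \<le> b2 * (\<Sum>n\<in>F. (cmod (a n))\<^sup>2 * (norm (\<phi> n))\<^sup>2)"
    using basis_bounds by blast
  have nphi: "norm (\<phi> n) > 0" for n using eig[of n] by simp
  have single: "ennreal (o1 * (norm (\<phi> n))\<^sup>2) \<le> L2_sq (\<lambda>t. exp (- lam n * complex_of_real t) * ip (\<phi> n) b)"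
      "L2_sq (\<lambda>t. exp (- lam n * complex_of_real t) * ip (\<phi> n) b) \<le> ennreal (o2 * (norm (\<phi> n))\<^sup>2)" for n
    using ob[of "\<phi> n"] unfolding Ob_single by auto
  have pos: "Re (lam n) > 0" for n
  proof (rule ccontr)
    assume "\<not> Re (lam n) > 0"
    hence le: "Re (lam n) \<le> 0" by simp
    show False
    proof (cases "ip (\<phi> n) b = 0")
      case True
      have "L2_sq (\<lambda>t. exp (- lam n * complex_of_real t) * ip (\<phi> n) b) = 0"
        unfolding True L2_sq_def by simp
      hence "o1 * (norm (\<phi> n))\<^sup>2 \<le> 0" using single(1)[of n] by (simp add: ennreal_eq_0_iff)
      moreover have "o1 * (norm (\<phi> n))\<^sup>2 > 0" using o nphi[of n] by simp
      ultimately show False by simp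
    next
      case False
      define N where "N = o2 * (norm (\<phi> n))\<^sup>2 / (cmod (ip (\<phi> n) b))\<^sup>2 + 1"
      have N0: "N \<ge> 0" unfolding N_def using o by simp
      have "ennreal ((cmod (ip (\<phi> n) b))\<^sup>2 * N) \<le> ennreal (o2 * (norm (\<phi> n))\<^sup>2)"
        using L2_exp_big[OF le N0, of "ip (\<phi> n) b"] single(2)[of n] by (rule order_trans)
      hence "(cmod (ip (\<phi> n) b))\<^sup>2 * N \<le> o2 * (norm (\<phi> n))\<^sup>2"
        using o by (subst (asm) ennreal_le_iff) auto
      moreover have "(cmod (ip (\<phi> n) b))\<^sup>2 * N = o2 * (norm (\<phi> n))\<^sup>2 + (cmod (ip (\<phi> n) b))\<^sup>2"
        unfolding N_def using False by (simp add: field_simps)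
      moreover have "(cmod (ip (\<phi> n) b))\<^sup>2 > 0" using False by simp
      ultimately show False by simp
    qed
  qed
  define e where "e n = (cmod (ip (\<phi> n) b))\<^sup>2 / (2 * Re (lam n))" for n
  have e_nn: "e n \<ge> 0" for n using pos[of n] unfolding e_def
    by (intro divide_nonneg_pos) simp_all
  have L2E: "L2_sq (\<lambda>t. exp (- lam n * complex_of_real t) * ip (\<phi> n) b) = ennreal (e n)" for n
    unfolding e_def by (rule L2_exp[OF pos])
  have e_lo: "o1 * (norm (\<phi> n))\<^sup>2 \<le> e n" for n
    using single(1)[of n] e_nn[of n] unfolding L2E by (subst (asm) ennreal_le_iff) auto
  have e_hi: "e n \<le> o2 * (norm (\<phi> n))\<^sup>2" for n
    using single(2)[of n] o nphi[of n] unfolding L2E by (subst (asm) ennreal_le_iff) auto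
  have o12: "o1 \<le> o2"
    using order_trans[OF e_lo[of 0] e_hi[of 0]] nphi[of 0] by simp
  have rat_sq: "(cmod (ip b (\<phi> n)) / (norm (\<phi> n) * sqrt (2 * Re (lam n))))\<^sup>2 = e n / (norm (\<phi> n))\<^sup>2" for n
    using ratio_sq[OF nphi[of n] pos[of n], of "cmod (ip b (\<phi> n))"] unfolding e_def cmod_ip_swap .
  have rat_nn: "0 \<le> cmod (ip b (\<phi> n)) / (norm (\<phi> n) * sqrt (2 * Re (lam n)))" for n
    using pos[of n] by simp
  have rat: "\<exists>c1 c2. 0 < c1 \<and> c1 \<le> c2 \<and> (\<forall>n.
        c1 \<le> cmod (ip b (\<phi> n)) / (norm (\<phi> n) * sqrt (2 * Re (lam n))) \<and>
        cmod (ip b (\<phi> n)) / (norm (\<phi> n) * sqrt (2 * Re (lam n))) \<le> c2)"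
  proof (rule exI[of _ "sqrt o1"], rule exI[of _ "sqrt o2"], intro conjI allI)
    show "0 < sqrt o1" using o by simp
    show "sqrt o1 \<le> sqrt o2" using o12 by simp
  next
    fix n
    let ?r = "cmod (ip b (\<phi> n)) / (norm (\<phi> n) * sqrt (2 * Re (lam n)))"
    have "o1 \<le> ?r\<^sup>2" unfolding rat_sq using e_lo[of n] nphi[of n] by (simp add: field_simps)
    hence "sqrt o1 \<le> sqrt (?r\<^sup>2)" by (rule real_sqrt_le_mono)
    thus "sqrt o1 \<le> ?r" by (simp only: real_sqrt_abs abs_of_nonneg[OF rat_nn])
    have "?r\<^sup>2 \<le> o2" unfolding rat_sq using e_hi[of n] nphi[of n] by (simp add: field_simps)
    hence "sqrt (?r\<^sup>2) \<le> sqrt o2" by (rule real_sqrt_le_mono)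
    thus "?r \<le> sqrt o2" by (simp only: real_sqrt_abs abs_of_nonneg[OF rat_nn])
  qed
  have combF: "ennreal (o1 * (norm (\<Sum>n\<in>F. sm (a n) (\<phi> n)))\<^sup>2) \<le> L2_sq (\<lambda>t. \<Sum>n\<in>F. a n * (exp (- lam n * complex_of_real t) * ip (\<phi> n) b))"
     "L2_sq (\<lambda>t. \<Sum>n\<in>F. a n * (exp (- lam n * complex_of_real t) * ip (\<phi> n) b)) \<le> ennreal (o2 * (norm (\<Sum>n\<in>F. sm (a n) (\<phi> n)))\<^sup>2)"
    for F a using ob[of "\<Sum>n\<in>F. sm (a n) (\<phi> n)"] unfolding Ob_comb by auto
  have unc: "unconditional_seq_L2 (\<lambda>n t. exp (- lam n * complex_of_real t) * ip (\<phi> n) b)"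
    unfolding unconditional_seq_L2_def
  proof (rule conjI)
    show "\<forall>n. in_L2 (\<lambda>t. exp (- lam n * complex_of_real t) * ip (\<phi> n) b)"
    proof
      fix n
      show "in_L2 (\<lambda>t. exp (- lam n * complex_of_real t) * ip (\<phi> n) b)"
        unfolding in_L2_def L2E
        by (auto intro!: borel_measurable_continuous_onI continuous_intros)
    qed
  next
   show "\<exists>c1 c2. 0 < c1 \<and> 0 < c2 \<and> (\<forall>F a. finite F \<longrightarrow>
        c1 * (\<Sum>n\<in>F. (cmod (a n))\<^sup>2 * enn2real (L2_sq (\<lambda>t. exp (- lam n * complex_of_real t) * ip (\<phi> n) b)))
          \<le> enn2real (L2_sq (\<lambda>t. \<Sum>n\<in>F. a n * (exp (- lam n * complex_of_real t) * ip (\<phi> n) b))) \<and>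
        enn2real (L2_sq (\<lambda>t. \<Sum>n\<in>F. a n * (exp (- lam n * complex_of_real t) * ip (\<phi> n) b)))
          \<le> c2 * (\<Sum>n\<in>F. (cmod (a n))\<^sup>2 * enn2real (L2_sq (\<lambda>t. exp (- lam n * complex_of_real t) * ip (\<phi> n) b))))"
   proof (rule exI[of _ "o1 * b1 / o2"], rule exI[of _ "o2 * b2 / o1"], intro conjI allI impI)
    show "0 < o1 * b1 / o2" "0 < o2 * b2 / o1" using o bb by simp_all
  next
    fix F :: "nat set" and a :: "nat \<Rightarrow> complex"
    assume F: "finite F"
    define x where "x = (\<Sum>n\<in>F. sm (a n) (\<phi> n))"
    define S where "S = (\<Sum>n\<in>F. (cmod (a n))\<^sup>2 * (norm (\<phi> n))\<^sup>2)"
    define T where "T = (\<Sum>n\<in>F. (cmod (a n))\<^sup>2 * e n)"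
    define L where "L = L2_sq (\<lambda>t. \<Sum>n\<in>F. a n * (exp (- lam n * complex_of_real t) * ip (\<phi> n) b))"
    have TS1: "o1 * S \<le> T" unfolding S_def T_def sum_distrib_left
    proof (intro sum_mono)
      fix n
      have "(cmod (a n))\<^sup>2 * (o1 * (norm (\<phi> n))\<^sup>2) \<le> (cmod (a n))\<^sup>2 * e n"
        by (rule mult_left_mono[OF e_lo]) simp
      thus "o1 * ((cmod (a n))\<^sup>2 * (norm (\<phi> n))\<^sup>2) \<le> (cmod (a n))\<^sup>2 * e n" by (simp add: mult_ac)
    qed
    have TS2: "T \<le> o2 * S" unfolding S_def T_def sum_distrib_left
    proof (intro sum_mono)
      fix n
      have "(cmod (a n))\<^sup>2 * e n \<le> (cmod (a n))\<^sup>2 * (o2 * (norm (\<phi> n))\<^sup>2)"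
        by (rule mult_left_mono[OF e_hi]) simp
      thus "(cmod (a n))\<^sup>2 * e n \<le> o2 * ((cmod (a n))\<^sup>2 * (norm (\<phi> n))\<^sup>2)" by (simp add: mult_ac)
    qed
    have bS: "b1 * S \<le> (norm x)\<^sup>2" "(norm x)\<^sup>2 \<le> b2 * S"
      using bF[OF F, of a] unfolding x_def S_def by auto
    have S_nn: "S \<ge> 0" unfolding S_def by (intro sum_nonneg) simp
    have Lb: "ennreal (o1 * (norm x)\<^sup>2) \<le> L" "L \<le> ennreal (o2 * (norm x)\<^sup>2)"
      using combF[of a F] unfolding x_def L_def by auto
    have Llo: "o1 * (norm x)\<^sup>2 \<le> enn2real L"
      using Lb o by (cases L) (auto simp: ennreal_le_iff top_unique)
    have Lhi: "enn2real L \<le> o2 * (norm x)\<^sup>2"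
      using Lb o by (cases L) (auto simp: ennreal_le_iff top_unique)
    have ET: "(\<Sum>n\<in>F. (cmod (a n))\<^sup>2 * enn2real (L2_sq (\<lambda>t. exp (- lam n * complex_of_real t) * ip (\<phi> n) b))) = T"
      unfolding T_def L2E using e_nn by simp
    have "o1 * b1 / o2 * T \<le> o1 * b1 / o2 * (o2 * S)"
      using TS2 o bb by (intro mult_left_mono) auto
    also have "\<dots> = o1 * (b1 * S)" using o by (simp add: field_simps)
    also have "\<dots> \<le> o1 * (norm x)\<^sup>2" using bS(1) o by (intro mult_left_mono) auto
    also have "\<dots> \<le> enn2real L" by (rule Llo)
    finally have low: "o1 * b1 / o2 * T \<le> enn2real L" .
    have "enn2real L \<le> o2 * (norm x)\<^sup>2" by (rule Lhi)
    also have "\<dots> \<le> o2 * (b2 * S)" using bS(2) o by (intro mult_left_mono) auto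
    also have "\<dots> = o2 * b2 / o1 * (o1 * S)" using o by (simp add: field_simps)
    also have "\<dots> \<le> o2 * b2 / o1 * T" using TS1 o bb by (intro mult_left_mono) auto
    finally have high: "enn2real L \<le> o2 * b2 / o1 * T" .
    show "o1 * b1 / o2 * (\<Sum>n\<in>F. (cmod (a n))\<^sup>2 * enn2real (L2_sq (\<lambda>t. exp (- lam n * complex_of_real t) * ip (\<phi> n) b)))
        \<le> enn2real (L2_sq (\<lambda>t. \<Sum>n\<in>F. a n * (exp (- lam n * complex_of_real t) * ip (\<phi> n) b)))"
      using low unfolding ET L_def .
    show "enn2real (L2_sq (\<lambda>t. \<Sum>n\<in>F. a n * (exp (- lam n * complex_of_real t) * ip (\<phi> n) b)))
        \<le> o2 * b2 / o1 * (\<Sum>n\<in>F. (cmod (a n))\<^sup>2 * enn2real (L2_sq (\<lambda>t. exp (- lam n * complex_of_real t) * ip (\<phi> n) b)))"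
      using high unfolding ET L_def .
   qed
  qed
  have lim: "(\<lambda>n. Re (lam n)) \<longlonglongrightarrow> 0"
  proof (rule ccontr)
    assume nl: "\<not> (\<lambda>n. Re (lam n)) \<longlonglongrightarrow> 0"
    obtain \<delta> where \<delta>: "\<delta> > 0" "\<And>N. \<exists>n\<ge>N. Re (lam n) \<ge> \<delta>"
    proof -
      from nl obtain r where r: "r > 0" "\<not> (\<exists>N. \<forall>n\<ge>N. norm (Re (lam n) - 0) < r)"
        unfolding LIMSEQ_iff by blast
      have "\<exists>n\<ge>N. Re (lam n) \<ge> r" for N
      proof -
        from r(2) obtain n where "n \<ge> N" "\<not> norm (Re (lam n) - 0) < r" by blast
        then show ?thesis using pos[of n] by (intro exI[of _ n]) auto
      qed
      then show ?thesis using r(1) that by blast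
    qed
    define S where "S = {n. Re (lam n) \<ge> \<delta>}"
    have infS: "infinite S" unfolding S_def infinite_nat_iff_unbounded_le using \<delta>(2) by auto
    define r where "r = enumerate S"
    have rS: "Re (lam (r k)) \<ge> \<delta>" for k
      using enumerate_in_set[OF infS, of k] unfolding r_def S_def by simp
    have rmono: "k < k' \<Longrightarrow> r k < r k'" for k k'
      unfolding r_def using enumerate_mono infS by blast
    obtain K where K: "\<And>n. cmod (lam n) \<le> K" using lam_bound by blast
    have Kpos: "K \<ge> \<delta>"
      using complex_Re_le_cmod[of "lam (r 0)"] K[of "r 0"] rS[of 0] by linarith
    have "bounded (range (\<lambda>k. lam (r k)))"
      by (rule boundedI[where B=K]) (use K in auto)
    then obtain l r2 where r2: "strict_mono r2" "((\<lambda>k. lam (r k)) \<circ> r2) \<longlonglongrightarrow> l"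
      using bounded_imp_convergent_subsequence by blast
    have cau: "Cauchy ((\<lambda>k. lam (r k)) \<circ> r2)" using r2(2) by (rule LIMSEQ_imp_Cauchy)
    define \<mu> where "\<mu> = o1 * b1 / (2 * o2 * K)"
    have \<mu>: "\<mu> > 0" unfolding \<mu>_def using o bb Kpos \<delta>(1) by simp
    define \<epsilon> where "\<epsilon> = min (\<delta> / 2) (sqrt (\<mu> * \<delta> ^ 3 / 64))"
    have \<epsilon>: "\<epsilon> > 0" unfolding \<epsilon>_def using \<mu> \<delta>(1) by simp
    obtain M where M: "\<And>m n. m \<ge> M \<Longrightarrow> n \<ge> M \<Longrightarrow> norm (((\<lambda>k. lam (r k)) \<circ> r2) m - ((\<lambda>k. lam (r k)) \<circ> r2) n) < \<epsilon>"
      using CauchyD[OF cau \<epsilon>] by blast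
    define i where "i = r (r2 M)"
    define j where "j = r (r2 (Suc M))"
    have ij: "i \<noteq> j" unfolding i_def j_def
      using rmono[OF strict_monoD[OF r2(1), of M "Suc M"]] by simp
    have dij: "cmod (lam i - lam j) < \<epsilon>" using M[of M "Suc M"] unfolding i_def j_def by simp
    have Ri: "Re (lam i) \<ge> \<delta>" and Rj: "Re (lam j) \<ge> \<delta>" unfolding i_def j_def by (rule rS)+
    have pne: "ip (\<phi> n) b \<noteq> 0" for n
    proof
      assume "ip (\<phi> n) b = 0"
      hence "e n = 0" unfolding e_def by simp
      moreover have "o1 * (norm (\<phi> n))\<^sup>2 > 0" using o nphi[of n] by simp
      ultimately show False using e_lo[of n] by simp
    qed
    define a where "a n = (if n = i then 1 / ip (\<phi> i) b else - (1 / ip (\<phi> j) b))" for n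
    define x where "x = (\<Sum>n\<in>{i, j}. sm (a n) (\<phi> n))"
    have fun_eq: "(\<lambda>t. \<Sum>n\<in>{i, j}. a n * (exp (- lam n * complex_of_real t) * ip (\<phi> n) b)) =
        (\<lambda>t. exp (- lam i * complex_of_real t) - exp (- lam j * complex_of_real t))"
      using ij pne[of i] pne[of j] by (simp add: a_def fun_eq_iff)
    have "ennreal (o1 * (norm x)\<^sup>2) \<le> L2_sq (\<lambda>t. exp (- lam i * complex_of_real t) - exp (- lam j * complex_of_real t))"
      using combF(1)[of a "{i, j}"] unfolding fun_eq x_def .
    also have "\<dots> \<le> ennreal (32 * (cmod (lam i - lam j))\<^sup>2 / \<delta> ^ 3)"
      by (rule exp_diff_L2[OF \<delta>(1) Ri Rj]) (use dij in \<open>simp add: \<epsilon>_def\<close>)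
    finally have up: "o1 * (norm x)\<^sup>2 \<le> 32 * (cmod (lam i - lam j))\<^sup>2 / \<delta> ^ 3"
      using \<delta>(1) by (subst (asm) ennreal_le_iff) auto
    have "32 * (cmod (lam i - lam j))\<^sup>2 / \<delta> ^ 3 \<le> 32 * \<epsilon>\<^sup>2 / \<delta> ^ 3"
      using dij \<delta>(1) by (intro divide_right_mono mult_left_mono power_mono) auto
    also have "\<epsilon>\<^sup>2 \<le> \<mu> * \<delta> ^ 3 / 64"
    proof -
      have "\<epsilon> \<le> sqrt (\<mu> * \<delta> ^ 3 / 64)" unfolding \<epsilon>_def by simp
      hence "\<epsilon>\<^sup>2 \<le> (sqrt (\<mu> * \<delta> ^ 3 / 64))\<^sup>2" using \<epsilon> by (intro power_mono) auto
      also have "\<dots> = \<mu> * \<delta> ^ 3 / 64" using \<mu> \<delta>(1) by simp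
      finally show ?thesis .
    qed
    hence "32 * \<epsilon>\<^sup>2 / \<delta> ^ 3 \<le> 32 * (\<mu> * \<delta> ^ 3 / 64) / \<delta> ^ 3"
      using \<delta>(1) by (intro divide_right_mono mult_left_mono) auto
    also have "\<dots> = \<mu> / 2" using \<delta>(1) by (simp add: field_simps)
    finally have up2: "o1 * (norm x)\<^sup>2 \<le> \<mu> / 2" using up by linarith
    have pi2: "(norm (\<phi> i))\<^sup>2 / (cmod (ip (\<phi> i) b))\<^sup>2 \<ge> 1 / (2 * o2 * K)"
    proof -
      have "(cmod (ip (\<phi> i) b))\<^sup>2 / (2 * Re (lam i)) \<le> o2 * (norm (\<phi> i))\<^sup>2"
        using e_hi[of i] unfolding e_def .
      hence "(cmod (ip (\<phi> i) b))\<^sup>2 \<le> 2 * Re (lam i) * (o2 * (norm (\<phi> i))\<^sup>2)"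
        using pos[of i] by (simp add: divide_le_eq mult.commute)
      also have "\<dots> \<le> 2 * K * (o2 * (norm (\<phi> i))\<^sup>2)"
        using complex_Re_le_cmod[of "lam i"] K[of i] o by (intro mult_right_mono) auto
      finally have "(cmod (ip (\<phi> i) b))\<^sup>2 \<le> 2 * K * (o2 * (norm (\<phi> i))\<^sup>2)" .
      moreover have "(cmod (ip (\<phi> i) b))\<^sup>2 > 0" using pne[of i] by simp
      ultimately show ?thesis using o Kpos \<delta>(1) by (simp add: field_simps)
    qed
    have "b1 * ((cmod (a i))\<^sup>2 * (norm (\<phi> i))\<^sup>2) \<le> b1 * (\<Sum>n\<in>{i, j}. (cmod (a n))\<^sup>2 * (norm (\<phi> n))\<^sup>2)"
      using ij bb by (intro mult_left_mono) auto
    also have "\<dots> \<le> (norm x)\<^sup>2" using bF[of "{i, j}" a] unfolding x_def by simp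
    finally have xlo: "b1 * ((cmod (a i))\<^sup>2 * (norm (\<phi> i))\<^sup>2) \<le> (norm x)\<^sup>2" .
    have ai: "(cmod (a i))\<^sup>2 * (norm (\<phi> i))\<^sup>2 = (norm (\<phi> i))\<^sup>2 / (cmod (ip (\<phi> i) b))\<^sup>2"
      unfolding a_def by (simp add: norm_divide power_divide)
    have "b1 * (1 / (2 * o2 * K)) \<le> b1 * ((cmod (a i))\<^sup>2 * (norm (\<phi> i))\<^sup>2)"
      unfolding ai using pi2 bb by (intro mult_left_mono) auto
    hence "b1 * (1 / (2 * o2 * K)) \<le> (norm x)\<^sup>2" using xlo by (rule order_trans)
    hence "o1 * (b1 * (1 / (2 * o2 * K))) \<le> o1 * (norm x)\<^sup>2" using o by (intro mult_left_mono) auto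
    hence "\<mu> \<le> o1 * (norm x)\<^sup>2" unfolding \<mu>_def by simp
    with up2 \<mu> show False by linarith
  qed
  show ?thesis using pos lim unc rat by blast
qed

end


theorem theorem3p15:
  fixes sm :: "complex \<Rightarrow> 'a::banach \<Rightarrow> 'a"
    and ip :: "'a \<Rightarrow> 'a \<Rightarrow> complex"
    and A :: "'a \<Rightarrow> 'a" and \<phi> :: "nat \<Rightarrow> 'a" and lam :: "nat \<Rightarrow> complex" and b :: 'a
  assumes hilb: "complex_hilbert sm ip"
    and sep: "separable_space TYPE('a)"
    and infdim: "infinite_dimensional sm"
    and bdd: "bounded_cop sm A"
    and basis: "unconditional_basis sm \<phi>"
    and eig: "\<And>n. \<phi> n \<noteq> 0 \<and> A (\<phi> n) = sm (- lam n) (\<phi> n)"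
  shows "exactly_observable ip A b \<longleftrightarrow>
     (\<forall>n. Re (lam n) > 0) \<and>
     (\<lambda>n. Re (lam n)) \<longlonglongrightarrow> 0 \<and>
     unconditional_seq_L2 (\<lambda>n t. exp (- lam n * complex_of_real t) * ip (\<phi> n) b) \<and>
     (\<exists>c1 c2. 0 < c1 \<and> c1 \<le> c2 \<and> (\<forall>n.
        c1 \<le> cmod (ip b (\<phi> n)) / (norm (\<phi> n) * sqrt (2 * Re (lam n))) \<and>
        cmod (ip b (\<phi> n)) / (norm (\<phi> n) * sqrt (2 * Re (lam n))) \<le> c2))"
proof -
  interpret setting sm ip A \<phi> lam b
    using hilb bdd basis eig by unfold_locales auto
  show ?thesis
  proof (rule iffI)
    assume "exactly_observable ip A b"
    then show "(\<forall>n. Re (lam n) > 0) \<and>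
     (\<lambda>n. Re (lam n)) \<longlonglongrightarrow> 0 \<and>
     unconditional_seq_L2 (\<lambda>n t. exp (- lam n * complex_of_real t) * ip (\<phi> n) b) \<and>
     (\<exists>c1 c2. 0 < c1 \<and> c1 \<le> c2 \<and> (\<forall>n.
        c1 \<le> cmod (ip b (\<phi> n)) / (norm (\<phi> n) * sqrt (2 * Re (lam n))) \<and>
        cmod (ip b (\<phi> n)) / (norm (\<phi> n) * sqrt (2 * Re (lam n))) \<le> c2))"
      by (rule nec)
  next
    assume H: "(\<forall>n. Re (lam n) > 0) \<and>
     (\<lambda>n. Re (lam n)) \<longlonglongrightarrow> 0 \<and>
     unconditional_seq_L2 (\<lambda>n t. exp (- lam n * complex_of_real t) * ip (\<phi> n) b) \<and>
     (\<exists>c1 c2. 0 < c1 \<and> c1 \<le> c2 \<and> (\<forall>n.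
        c1 \<le> cmod (ip b (\<phi> n)) / (norm (\<phi> n) * sqrt (2 * Re (lam n))) \<and>
        cmod (ip b (\<phi> n)) / (norm (\<phi> n) * sqrt (2 * Re (lam n))) \<le> c2))"
    show "exactly_observable ip A b"
      using H by (intro suff) auto
  qed
qed

end
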